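(* Let $p$ be an odd prime and $q\in\mathbb C_p$ with $|1-q|_p<p^{-1/(p-1)}$. For $k,n\in\mathbb Z_+$ with $k\le n$, $$\int_{\mathbb Z_p}B_{k,n}(x,q)\,d\mu_{-1}(x)=\sum_{j=k}^n\sum_{m=0}^\infty\binom jk\binom nj\binom{j-k+m-1}{m}(-1)^{j-k+m}q^{j-k}(q-1)^mE_{m+j,q}.$$
   Context: For $x\in\mathbb Z_p$, $[x]_q=\frac{1-q^x}{1-q}$. The modified $q$-Bernstein polynomials are $B_{k,n}(x,q)=\binom nk[x]_q^k[1-x]_q^{n-k}$ for $0\le k\le n$. The fermionic $p$-adic integral is $\int_{\mathbb Z_p}f(x)\,d\mu_{-1}(x)=\lim_{N\to\infty}\sum_{x=0}^{p^N-1}f(x)(-1)^x$, and $E_{n,q}=\int_{\mathbb Z_p}[x]_q^n\,d\mu_{-1}(x)$ are the $q$-Euler numbers. Binomial coefficients $\binom{a}{m}$ are the generalized ones (so $\binom{-1}{0}=1$, $\binom{m-1}{m}=0$ for $m\ge1$). *)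

theory Defs
  imports Complex_Main "HOL-Computational_Algebra.Polynomial"
begin

text \<open>An absolute value nv on a field 'a (char 0) realising a model of C_p:
  a non-archimedean, complete absolute value with |p| = 1/p, on an algebraically closed field.\<close>

definition av_tendsto :: "('a::field \<Rightarrow> real) \<Rightarrow> (nat \<Rightarrow> 'a) \<Rightarrow> 'a \<Rightarrow> bool" where
  "av_tendsto nv f L \<longleftrightarrow> (\<forall>e>0. \<exists>N. \<forall>n\<ge>N. nv (f n - L) < e)"

definition av_cauchy :: "('a::field \<Rightarrow> real) \<Rightarrow> (nat \<Rightarrow> 'a) \<Rightarrow> bool" where
  "av_cauchy nv f \<longleftrightarrow> (\<forall>e>0. \<exists>N. \<forall>m\<ge>N. \<forall>n\<ge>N. nv (f m - f n) < e)"

definition is_Cp_abs :: "nat \<Rightarrow> ('a::field_char_0 \<Rightarrow> real) \<Rightarrow> bool" where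
  "is_Cp_abs p nv \<longleftrightarrow>
     (\<forall>x. nv x \<ge> 0) \<and> (\<forall>x. nv x = 0 \<longleftrightarrow> x = 0) \<and>
     (\<forall>x y. nv (x * y) = nv x * nv y) \<and>
     (\<forall>x y. nv (x + y) \<le> max (nv x) (nv y)) \<and>
     nv (of_nat p) = 1 / real p \<and>
     (\<forall>f. av_cauchy nv f \<longrightarrow> (\<exists>L. av_tendsto nv f L)) \<and>
     (\<forall>P :: 'a poly. degree P > 0 \<longrightarrow> (\<exists>z. poly P z = 0))"

definition av_lim :: "('a::field \<Rightarrow> real) \<Rightarrow> (nat \<Rightarrow> 'a) \<Rightarrow> 'a" where
  "av_lim nv f = (THE L. av_tendsto nv f L)"

definition av_suminf :: "('a::field \<Rightarrow> real) \<Rightarrow> (nat \<Rightarrow> 'a) \<Rightarrow> 'a" where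
  "av_suminf nv f = av_lim nv (\<lambda>M. \<Sum>m<M. f m)"

text \<open>q-number [x]_q = (1 - q^x)/(1 - q) (only needed at integers x).\<close>
definition qnum :: "'a::field \<Rightarrow> int \<Rightarrow> 'a" where
  "qnum q x = (1 - q powi x) / (1 - q)"

definition qBernstein :: "nat \<Rightarrow> nat \<Rightarrow> int \<Rightarrow> 'a::field \<Rightarrow> 'a" where
  "qBernstein k n x q = of_nat (n choose k) * qnum q x ^ k * qnum q (1 - x) ^ (n - k)"

definition fermionic_int :: "nat \<Rightarrow> ('a::field \<Rightarrow> real) \<Rightarrow> (int \<Rightarrow> 'a) \<Rightarrow> 'a" where
  "fermionic_int p nv f = av_lim nv (\<lambda>N. \<Sum>x<p ^ N. f (int x) * (-1) ^ x)"

definition qEuler :: "nat \<Rightarrow> ('a::field \<Rightarrow> real) \<Rightarrow> 'a \<Rightarrow> nat \<Rightarrow> 'a" where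
  "qEuler p nv q n = fermionic_int p nv (\<lambda>x. qnum q x ^ n)"

end

theory Submission
  imports Defs "HOL-Computational_Algebra.Primes"
begin


locale ultra =
  fixes N :: "'a::field_char_0 \<Rightarrow> real"
  assumes nn: "N x \<ge> 0" and nz: "N x = 0 \<longleftrightarrow> x = 0"
    and mu: "N (x*y) = N x * N y" and ul: "N (x+y) \<le> max (N x) (N y)"
    and cpl: "av_cauchy N f \<Longrightarrow> \<exists>L. av_tendsto N f L"
begin

lemma max_le: "(x::real) \<le> max a b \<Longrightarrow> a \<le> c \<Longrightarrow> b \<le> c \<Longrightarrow> x \<le> c" by linarith
lemma max_lt: "(x::real) \<le> max a b \<Longrightarrow> a < c \<Longrightarrow> b < c \<Longrightarrow> x < c" by linarith

lemma N0[simp]: "N 0 = 0" using nz by simp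

lemma N1[simp]: "N 1 = 1"
proof -
  have "N 1 = N 1 * N 1" using mu[of 1 1] by simp
  moreover have "N 1 \<noteq> 0" using nz by simp
  ultimately show ?thesis by (metis mult_cancel_left1)
qed

lemma Nm1[simp]: "N (-1) = 1"
proof -
  have "N (-1) * N (-1) = 1" using mu[of "-1" "-1"] by simp
  moreover have "N (-1) \<ge> 0" by (rule nn)
  ultimately show ?thesis
    by (metis less_le mult_less_cancel_left1 mult_less_cancel_right1 mult_le_cancel_right1 not_less_iff_gr_or_eq order_less_le_trans)
qed

lemma Nneg[simp]: "N (- x) = N x"
  using mu[of "-1" x] by simp

lemma Nminus: "N (x - y) \<le> max (N x) (N y)"
  using ul[of x "-y"] by simp

lemma Ncomm: "N (x - y) = N (y - x)"
  by (metis Nneg minus_diff_eq)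

lemma Npow[simp]: "N (x ^ n) = N x ^ n"
  by (induction n) (simp_all add: mu)

lemma Ndiv: "N (x / y) = N x / N y"
proof (cases "y = 0")
  case False
  have "N x = N (x / y) * N y" using mu[of "x/y" y] False by simp
  moreover have "N y \<noteq> 0" using False nz by simp
  ultimately show ?thesis by simp
qed simp

lemma Nnat: "N (of_nat n) \<le> 1"
proof (induction n)
  case (Suc n) then show ?case using ul[of 1 "of_nat n"] by (simp add: add.commute)
qed simp

lemma Nint: "N (of_int z) \<le> 1"
  by (cases "z \<ge> 0") (metis Nnat of_int_of_nat_eq nonneg_int_cases, metis Nneg Nnat of_int_minus of_int_of_nat_eq minus_minus nonneg_int_cases nle_le neg_0_le_iff_le)

lemma Nsum: assumes "\<And>i. i \<in> A \<Longrightarrow> N (f i) \<le> b" "0 \<le> b" shows "N (sum f A) \<le> b"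
  using assms
proof (induction A rule: infinite_finite_induct)
  case (insert x F)
  then have "N (f x) \<le> b" "N (sum f F) \<le> b" by auto
  then show ?case using ul[of "f x" "sum f F"] insert(1,2) by simp
qed auto

lemma Nstrict: assumes "N a < N b" shows "N (a + b) = N b"
proof -
  have "N b \<le> max (N (a+b)) (N a)" using Nminus[of "a+b" a] by simp
  then have "N b \<le> N (a+b)" using assms by linarith
  moreover have "N (a+b) \<le> N b" using ul[of a b] assms by simp
  ultimately show ?thesis by simp
qed

lemma tri: "N (a - c) \<le> max (N (a - b)) (N (b - c))"
  using ul[of "a-b" "b-c"] by simp

lemma tend_unique: assumes "av_tendsto N f L1" "av_tendsto N f L2" shows "L1 = L2"
proof -
  have "N (L1 - L2) < e" if "e > 0" for e
  proof -
    obtain n1 where "\<forall>n\<ge>n1. N (f n - L1) < e" using assms(1) \<open>e>0\<close> unfolding av_tendsto_def by blast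
    moreover obtain n2 where "\<forall>n\<ge>n2. N (f n - L2) < e" using assms(2) \<open>e>0\<close> unfolding av_tendsto_def by blast
    ultimately have a: "N (f (max n1 n2) - L1) < e" "N (f (max n1 n2) - L2) < e" by auto
    have "N (L1 - L2) \<le> max (N (L1 - f (max n1 n2))) (N (f (max n1 n2) - L2))" by (rule tri)
    then show ?thesis using a Ncomm[of L1 "f (max n1 n2)"] by auto
  qed
  from this[of "N (L1 - L2)"] have "N (L1 - L2) \<le> 0" by linarith
  then show ?thesis using nn[of "L1-L2"] nz[of "L1-L2"] by simp
qed

lemma tend_lim: "av_tendsto N f L \<Longrightarrow> av_lim N f = L"
  unfolding av_lim_def using tend_unique by blast

lemma tend_const: "av_tendsto N (\<lambda>n. c) c"
  unfolding av_tendsto_def by simp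

lemma tend_add: assumes "av_tendsto N f a" "av_tendsto N g b"
  shows "av_tendsto N (\<lambda>n. f n + g n) (a + b)"
  unfolding av_tendsto_def
proof (intro allI impI)
  fix e :: real assume "e > 0"
  obtain n1 where 1: "\<forall>n\<ge>n1. N (f n - a) < e" using assms(1) \<open>e>0\<close> unfolding av_tendsto_def by blast
  obtain n2 where 2: "\<forall>n\<ge>n2. N (g n - b) < e" using assms(2) \<open>e>0\<close> unfolding av_tendsto_def by blast
  show "\<exists>M. \<forall>n\<ge>M. N (f n + g n - (a + b)) < e"
  proof (intro exI allI impI)
    fix n assume "n \<ge> max n1 n2"
    have "N (f n + g n - (a + b)) \<le> max (N (f n - a)) (N (g n - b))"
      using ul[of "f n - a" "g n - b"] by (simp add: algebra_simps)
    then show "N (f n + g n - (a + b)) < e" using 1 2 \<open>n \<ge> max n1 n2\<close> by (metis max.bounded_iff max_lt)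
  qed
qed

lemma tend_cmult: assumes "av_tendsto N f a"
  shows "av_tendsto N (\<lambda>n. c * f n) (c * a)"
proof (cases "c = 0")
  case True then show ?thesis by (simp add: tend_const)
next
  case False
  then have cp: "N c > 0" using nn[of c] nz[of c] by simp
  show ?thesis unfolding av_tendsto_def
  proof (intro allI impI)
    fix e :: real assume "e > 0"
    then obtain n1 where 1: "\<forall>n\<ge>n1. N (f n - a) < e / N c" using assms cp unfolding av_tendsto_def
      by (meson divide_pos_pos)
    show "\<exists>M. \<forall>n\<ge>M. N (c * f n - c * a) < e"
    proof (intro exI allI impI)
      fix n assume "n \<ge> n1"
      then have "N (f n - a) * N c < e" using 1 cp by (simp add: pos_less_divide_eq)
      then show "N (c * f n - c * a) < e" using mu[of c "f n - a"] by (simp add: algebra_simps)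
    qed
  qed
qed

lemma tend_sum: assumes "\<And>i. i \<in> A \<Longrightarrow> av_tendsto N (f i) (a i)"
  shows "av_tendsto N (\<lambda>n. \<Sum>i\<in>A. f i n) (\<Sum>i\<in>A. a i)"
  using assms
proof (induction A rule: infinite_finite_induct)
  case (insert x F) then show ?case using tend_add[of "f x" "a x"] by simp
qed (simp_all add: tend_const)

lemma tend_bound: assumes "av_tendsto N f L" "\<And>n. n \<ge> n0 \<Longrightarrow> N (f n - a) \<le> b"
  shows "N (L - a) \<le> b"
proof (rule ccontr)
  assume "\<not> ?thesis"
  then have b: "N (L - a) > b" by simp
  then obtain n1 where 1: "\<forall>n\<ge>n1. N (f n - L) < N (L - a)" using assms(1) b
    nn[of "L-a"] unfolding av_tendsto_def
    by (metis assms(2) le_less_trans nat_le_linear nn)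
  let ?n = "max n0 n1"
  have "N (L - a) \<le> max (N (L - f ?n)) (N (f ?n - a))" by (rule tri)
  moreover have "N (L - f ?n) < N (L - a)" using 1 Ncomm[of L] by auto
  moreover have "N (f ?n - a) < N (L - a)" using assms(2)[of ?n] b by auto
  ultimately show False by linarith
qed

lemma cauchy_geom:
  fixes f :: "nat \<Rightarrow> 'a" and c \<rho> :: real
  assumes "\<And>n. N (f (Suc n) - f n) \<le> c * \<rho> ^ n" "0 \<le> \<rho>" "\<rho> < 1" "0 \<le> c"
  shows "\<exists>L. av_tendsto N f L \<and> (\<forall>n. N (L - f n) \<le> c * \<rho> ^ n)"
proof -
  have d: "N (f m - f n) \<le> c * \<rho> ^ n" if "n \<le> m" for m n
    using that
  proof (induction m rule: dec_induct)
    case base then show ?case using assms by simp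
  next
    case (step m)
    have "c * \<rho> ^ m \<le> c * \<rho> ^ n" using step(1) assms
      by (simp add: mult_left_mono power_decreasing)
    moreover have "N (f (Suc m) - f n) \<le> max (N (f (Suc m) - f m)) (N (f m - f n))" by (rule tri)
    ultimately show ?case using assms(1)[of m] step by linarith
  qed
  have "av_cauchy N f" unfolding av_cauchy_def
  proof (intro allI impI)
    fix e :: real assume "e > 0"
    obtain K where K: "\<rho> ^ K < e / (c + 1)" using real_arch_pow_inv[of "e/(c+1)" \<rho>] \<open>e>0\<close> assms by auto
    have cK: "c * \<rho> ^ K < e"
    proof -
      have "c * \<rho> ^ K \<le> (c+1) * \<rho> ^ K" using assms by (simp add: mult_right_mono)
      also have "\<dots> < e" using K assms by (simp add: pos_less_divide_eq mult.commute)
      finally show ?thesis .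
    qed
    show "\<exists>M. \<forall>m\<ge>M. \<forall>n\<ge>M. N (f m - f n) < e"
    proof (intro exI allI impI)
      fix m n assume "m \<ge> K" "n \<ge> K"
      have b: "c * \<rho> ^ i \<le> c * \<rho> ^ K" if "i \<ge> K" for i using that assms
        by (simp add: mult_left_mono power_decreasing)
      show "N (f m - f n) < e"
      proof (cases "n \<le> m")
        case True then show ?thesis using d[of n m] b[of n] \<open>n \<ge> K\<close> cK by linarith
      next
        case False then show ?thesis using d[of m n] b[of m] \<open>m \<ge> K\<close> cK Ncomm[of "f m"] by auto
      qed
    qed
  qed
  then obtain L where L: "av_tendsto N f L" using cpl by blast
  moreover have "N (L - f n) \<le> c * \<rho> ^ n" for n
    by (rule tend_bound[OF L, of n]) (use d in auto)
  ultimately show ?thesis by blast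
qed

end


context ultra
begin

lemma Ninv: "N (inverse x) = 1 / N x"
  using Ndiv[of 1 x] by (simp add: inverse_eq_divide)

definition bb :: "nat \<Rightarrow> nat \<Rightarrow> nat" where "bb l m = (l + m - 1) choose m"

definition SS :: "'a \<Rightarrow> nat \<Rightarrow> nat \<Rightarrow> 'a" where
  "SS t l M = (\<Sum>m<M. of_nat (bb l m) * t ^ m)"

lemma hockey: "(\<Sum>i<Suc M. bb l i) = bb (Suc l) M"
proof (induction M)
  case 0 then show ?case by (simp add: bb_def)
next
  case (Suc M)
  have "(\<Sum>i<Suc (Suc M). bb l i) = bb (Suc l) M + bb l (Suc M)" using Suc by simp
  also have "\<dots> = bb (Suc l) (Suc M)" by (simp add: bb_def)
  finally show ?case .
qed

lemma SS_rec: "(1 - t) * SS t (Suc l) M = SS t l M - t ^ M * of_nat (\<Sum>i<M. bb l i)"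
proof (induction M)
  case 0 then show ?case by (simp add: SS_def)
next
  case (Suc M)
  have h: "bb (Suc l) M = bb l M + (\<Sum>i<M. bb l i)" using hockey[of l M] by simp
  have "(1 - t) * SS t (Suc l) (Suc M) = (1 - t) * SS t (Suc l) M + (1 - t) * of_nat (bb (Suc l) M) * t ^ M"
    by (simp add: SS_def algebra_simps)
  also have "\<dots> = SS t l M - t ^ M * of_nat (\<Sum>i<M. bb l i) + (1 - t) * (of_nat (bb l M) + of_nat (\<Sum>i<M. bb l i)) * t ^ M"
    using Suc h by simp
  also have "\<dots> = SS t l (Suc M) - t ^ Suc M * of_nat (\<Sum>i<Suc M. bb l i)"
    by (simp add: SS_def algebra_simps)
  finally show ?case .
qed

lemma SS_bound: assumes "N t < 1"
  shows "N (inverse ((1 - t) ^ l) - SS t l M) \<le> N t ^ M"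
proof (induction l)
  case 0
  have "SS t 0 M = (if M = 0 then 0 else 1)"
  proof -
    have "SS t 0 M = (\<Sum>m<M. if m = 0 then 1 else 0)"
      unfolding SS_def bb_def by (rule sum.cong) auto
    then show ?thesis by (cases M) auto
  qed
  then show ?case using nn[of t] by simp
next
  case (Suc l)
  have N1t: "N (1 - t) = 1" using Nstrict[of "-t" 1] assms by simp
  then have t1: "1 - t \<noteq> 0" using nz by force
  define K :: 'a where "K = of_nat (\<Sum>i<M. bb l i)"
  have SSe: "SS t (Suc l) M = (SS t l M - t ^ M * K) / (1 - t)"
    using SS_rec[of t l M] t1 unfolding K_def by (simp add: field_simps)
  have "inverse ((1 - t) ^ Suc l) - SS t (Suc l) M
       = ((inverse ((1 - t) ^ l) - SS t l M) + t ^ M * K) / (1 - t)"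
    using t1 by (simp add: SSe diff_divide_distrib add_divide_distrib inverse_eq_divide)
  then have "N (inverse ((1 - t) ^ Suc l) - SS t (Suc l) M)
       = N ((inverse ((1 - t) ^ l) - SS t l M) + t ^ M * K)"
    using N1t by (simp add: Ndiv)
  also have "\<dots> \<le> N t ^ M"
  proof -
    have "N (t ^ M * K) \<le> N t ^ M" unfolding K_def using Nnat[of "\<Sum>i<M. bb l i"] nn[of t]
      by (simp add: mu mult_left_le zero_le_power)
    then show ?thesis using ul[of "inverse ((1 - t) ^ l) - SS t l M" "t ^ M * K"] Suc by linarith
  qed
  finally show ?case .
qed

lemma bb_gchoose: "((of_int (int l + int m - 1) :: 'a) gchoose m) = of_nat (bb l m)"
proof (cases "l + m = 0")
  case True then show ?thesis by (simp add: bb_def)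
next
  case False
  then have "int l + int m - 1 = int (l + m - 1)" by linarith
  then show ?thesis unfolding bb_def
    by (metis binomial_gbinomial of_int_of_nat_eq)
qed

end

locale ultraq = ultra +
  fixes q :: "'a::field_char_0"
  assumes q1: "q \<noteq> 1" and qr: "N (1 - q) < 1"
begin

lemma Nq: "N q = 1"
  using Nstrict[of "q - 1" 1] qr Ncomm[of q 1] by simp

lemma q0: "q \<noteq> 0" using Nq by auto

lemma Nqpow: "N (q ^ n) = 1" by (simp add: Nq)

lemma Nqpowi: "N (q powi z) = 1"
  by (cases "z \<ge> 0") (auto simp: power_int_def Ninv Nq)

lemma rpos: "N (1 - q) > 0" using q1 nz[of "1-q"] nn[of "1-q"] by auto

lemma Nsumq: "N (\<Sum>i<m. q ^ i) \<le> 1"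
  by (rule Nsum) (auto simp: Nq)

lemma Nt_nat: "N (1 - q ^ m) \<le> N (1 - q)"
proof -
  have "N (1 - q ^ m) = N (1 - q) * N (\<Sum>i<m. q ^ i)"
    by (simp only: one_diff_power_eq mu)
  then show ?thesis using Nsumq[of m] nn[of "1-q"] by (simp add: mult_left_le)
qed

lemma Nt: "N (1 - q powi z) \<le> N (1 - q)"
proof (cases "z \<ge> 0")
  case True
  then have "q powi z = q ^ nat z" by (simp add: power_int_def)
  then show ?thesis using Nt_nat by simp
next
  case False
  define u where "u = q ^ nat (- z)"
  have u: "q powi z = inverse u" using False unfolding u_def by (simp add: power_int_def power_inverse)
  have u0: "u \<noteq> 0" unfolding u_def using q0 by simp
  have "1 - inverse u = (u - 1) * inverse u" using u0 by (simp add: algebra_simps)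
  then have "N (1 - q powi z) = N (u - 1) * N (inverse u)" by (simp add: u mu)
  also have "\<dots> = N (1 - u)" using Ncomm[of u 1] by (simp add: Ninv u_def Nq)
  finally show ?thesis using Nt_nat unfolding u_def by simp
qed

lemma Nqnum: "N (qnum q z) \<le> 1"
  unfolding qnum_def using Nt[of z] rpos by (simp add: Ndiv)

lemma qnum_refl: "qnum q (1 - x) = 1 - q * qnum q x * inverse (q powi x)"
proof -
  have w: "q powi x \<noteq> 0" by (metis N0 Nqpowi zero_neq_one)
  have "q powi (1 - x) = q / q powi x" using power_int_diff[of q 1 x] q0 by simp
  moreover have "1 - q \<noteq> 0" using q1 by simp
  ultimately show ?thesis unfolding qnum_def using w
    by (simp add: divide_simps) (simp add: algebra_simps)
qed

end


context ultraq
begin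

definition cc :: "nat \<Rightarrow> nat \<Rightarrow> nat \<Rightarrow> nat \<Rightarrow> 'a" where
  "cc k n j m = of_nat (j choose k) * of_nat (n choose j)
        * ((of_int (int j - int k + int m - 1) :: 'a) gchoose m)
        * (-1) ^ (j - k + m) * q ^ (j - k) * (q - 1) ^ m"

definition DD :: "nat \<Rightarrow> nat \<Rightarrow> int \<Rightarrow> nat \<Rightarrow> 'a" where
  "DD k n x j = of_nat (j choose k) * of_nat (n choose j) * (-1) ^ (j - k) * q ^ (j - k) * qnum q x ^ j"

lemma bb_gchoose2: "k \<le> j \<Longrightarrow> ((of_int (int j - int k + int m - 1) :: 'a) gchoose m) = of_nat (bb (j - k) m)"
  using bb_gchoose[of "j - k" m] by (simp add: of_nat_diff)

lemma Bexp: assumes "k \<le> n"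
  shows "qBernstein k n x q = (\<Sum>j=k..n. DD k n x j * inverse (q powi x) ^ (j - k))"
proof -
  define X where "X = qnum q x"
  define a where "a = - (q * X * inverse (q powi x))"
  have "qBernstein k n x q = of_nat (n choose k) * X ^ k * (a + 1) ^ (n - k)"
    unfolding qBernstein_def X_def a_def qnum_refl by simp
  also have "\<dots> = of_nat (n choose k) * X ^ k * (\<Sum>l\<le>n-k. of_nat ((n-k) choose l) * a ^ l)"
    by (simp add: binomial_ring)
  also have "\<dots> = (\<Sum>l=0..n-k. of_nat (n choose k) * X ^ k * (of_nat ((n-k) choose l) * a ^ l))"
    by (simp add: sum_distrib_left atMost_atLeast0)
  also have "\<dots> = (\<Sum>l=0..n-k. DD k n x (l + k) * inverse (q powi x) ^ (l + k - k))"
  proof (rule sum.cong)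
    fix l assume l: "l \<in> {0..n-k}"
    have ch: "(n choose (l+k)) * ((l+k) choose k) = (n choose k) * ((n - k) choose l)"
      using choose_mult[of k "l+k" n] l assms by simp
    have ch': "(of_nat (n choose k) * of_nat ((n - k) choose l) :: 'a) = of_nat ((l + k) choose k) * of_nat (n choose (l + k))"
      using arg_cong[OF ch, of "of_nat :: nat \<Rightarrow> 'a"] by (simp add: mult.commute)
    have al: "a ^ l = (-1)^l * q^l * X^l * inverse (q powi x) ^ l" unfolding a_def
      by (simp add: power_minus[of "q * X * inverse (q powi x)"] power_mult_distrib)
    have "of_nat (n choose k) * X ^ k * (of_nat ((n-k) choose l) * a ^ l)
       = (of_nat (n choose k) * of_nat ((n - k) choose l)) * (-1) ^ l * q ^ l * X ^ (l + k) * inverse (q powi x) ^ l"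
      unfolding al by (simp add: power_add mult_ac)
    also have "\<dots> = DD k n x (l + k) * inverse (q powi x) ^ (l + k - k)"
      unfolding ch' DD_def X_def by simp
    finally show "of_nat (n choose k) * X ^ k * (of_nat ((n-k) choose l) * a ^ l) = DD k n x (l + k) * inverse (q powi x) ^ (l + k - k)" .
  qed simp
  also have "\<dots> = (\<Sum>j=k..n. DD k n x j * inverse (q powi x) ^ (j - k))"
    using sum.shift_bounds_cl_nat_ivl[of "\<lambda>j. DD k n x j * inverse (q powi x) ^ (j - k)" 0 k "n-k"] assms
    by simp
  finally show ?thesis .
qed

lemma NDD: "N (DD k n x j) \<le> 1"
proof -
  have "N (DD k n x j) = N (of_nat (j choose k)) * N (of_nat (n choose j)) * N (qnum q x) ^ j"
    unfolding DD_def by (simp add: mu Nq)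
  also have "\<dots> \<le> 1"
    using Nnat[of "j choose k"] Nnat[of "n choose j"] Nqnum[of x] nn
    by (simp add: mult_le_one power_le_one)
  finally show ?thesis .
qed

lemma trunc_bound: assumes "k \<le> n"
  shows "N (qBernstein k n x q - (\<Sum>j=k..n. \<Sum>m<M. cc k n j m * qnum q x ^ (m + j))) \<le> N (1 - q) ^ M"
proof -
  define t where "t = 1 - q powi x"
  have q1': "1 - q \<noteq> 0" using q1 by simp
  have tX: "t = (1 - q) * qnum q x" unfolding t_def qnum_def using q1' by simp
  have Nt1: "N t < 1" using Nt[of x] qr unfolding t_def by linarith
  have trm: "(\<Sum>m<M. cc k n j m * qnum q x ^ (m + j)) = DD k n x j * SS t (j - k) M" if kj: "k \<le> j" for j
    unfolding SS_def sum_distrib_left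
  proof (rule sum.cong)
    fix m
    have qm: "(1 - q)^m = (-1)^m * (q-1)^m" by (metis minus_diff_eq power_minus)
    have e2: "(-1) ^ (j - k + m) * (q - 1) ^ m * qnum q x ^ m = (-1) ^ (j - k) * t ^ m"
      unfolding tX power_mult_distrib qm by (simp add: power_add mult_ac)
    then show "cc k n j m * qnum q x ^ (m + j) = DD k n x j * (of_nat (bb (j - k) m) * t ^ m)"
    proof -
      have "cc k n j m * qnum q x ^ (m + j) = of_nat (j choose k) * of_nat (n choose j) * of_nat (bb (j - k) m)
         * q ^ (j - k) * qnum q x ^ j * ((-1) ^ (j - k + m) * (q - 1) ^ m * qnum q x ^ m)"
        unfolding cc_def bb_gchoose2[OF kj] by (simp add: power_add mult_ac)
      also have "\<dots> = DD k n x j * (of_nat (bb (j - k) m) * t ^ m)"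
        unfolding e2 DD_def by (simp add: mult_ac)
      finally show ?thesis .
    qed
  qed simp
  have "qBernstein k n x q - (\<Sum>j=k..n. \<Sum>m<M. cc k n j m * qnum q x ^ (m + j))
      = (\<Sum>j=k..n. DD k n x j * (inverse ((1 - t) ^ (j - k)) - SS t (j - k) M))"
    unfolding Bexp[OF assms] sum_subtractf[symmetric]
  proof (rule sum.cong)
    fix j assume "j \<in> {k..n}"
    then have "k \<le> j" by simp
    show "DD k n x j * inverse (q powi x) ^ (j - k) - (\<Sum>m<M. cc k n j m * qnum q x ^ (m + j))
         = DD k n x j * (inverse ((1 - t) ^ (j - k)) - SS t (j - k) M)"
      unfolding trm[OF \<open>k \<le> j\<close>] by (simp add: t_def right_diff_distrib power_inverse)
  qed simp
  also have "N \<dots> \<le> N t ^ M"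
  proof (rule Nsum)
    fix j
    show "N (DD k n x j * (inverse ((1 - t) ^ (j - k)) - SS t (j - k) M)) \<le> N t ^ M"
      using NDD[of k n x j] SS_bound[OF Nt1, of "j - k" M] nn
      by (simp add: mu mult_le_one) (metis mult_left_le_one_le nn order_trans)
  qed (simp add: nn)
  also have "\<dots> \<le> N (1 - q) ^ M" using Nt[of x] nn unfolding t_def by (simp add: power_mono)
  finally show ?thesis .
qed

end


lemma sum_split_add: "(\<Sum>x<m+(n::nat). g x) = (\<Sum>x<m. g x) + (\<Sum>y<n. g (m + y))"
  by (induction n) (simp_all add: add.assoc)

lemma sum_split_mult: "(\<Sum>x<a*(b::nat). g x) = (\<Sum>i<b. \<Sum>y<a. g (a*i + y))"
proof (induction b)
  case (Suc b)
  have "(\<Sum>x<a * Suc b. g x) = (\<Sum>x<a * b + a. g x)" by (simp add: add.commute)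
  also have "\<dots> = (\<Sum>x<a * b. g x) + (\<Sum>y<a. g (a * b + y))" by (rule sum_split_add)
  finally show ?case using Suc by simp
qed simp

lemma alt_sum: "odd (p::nat) \<Longrightarrow> (\<Sum>i<p. (-1::'a::comm_ring_1) ^ i) = 1"
proof -
  have e: "(\<Sum>i<2*r. (-1::'a) ^ i) = 0" for r
    by (induction r) (simp_all add: power_add)
  assume "odd p"
  then obtain r where "p = 2*r + 1" by (metis oddE)
  then show ?thesis using e[of r] by (simp add: power_add)
qed

definition FN :: "nat \<Rightarrow> (int \<Rightarrow> 'a::field) \<Rightarrow> nat \<Rightarrow> 'a" where
  "FN p f K = (\<Sum>x<p ^ K. f (int x) * (-1) ^ x)"

lemma FN_diff:
  assumes "odd p"
  shows "FN p f (Suc K) - FN p f K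
     = (\<Sum>y<p^K. (-1) ^ y * (\<Sum>i<p. (-1) ^ i * (f (int y + int (p^K * i)) - f (int y))))"
proof -
  define a where "a = p ^ K"
  have ao: "odd a" unfolding a_def using assms by simp
  have m1: "(-1::'a) ^ (a * i + y) = (-1) ^ i * (-1) ^ y" for i y
  proof -
    have "(-1::'a) ^ (a * i) = (-1) ^ i"
      using ao by (simp add: power_mult)
    then show ?thesis by (simp add: power_add)
  qed
  have "FN p f (Suc K) = (\<Sum>i<p. \<Sum>y<a. f (int (a*i + y)) * (-1) ^ (a*i + y))"
    unfolding FN_def a_def power_Suc2 by (rule sum_split_mult)
  also have "\<dots> = (\<Sum>i<p. \<Sum>y<a. (-1) ^ y * ((-1) ^ i * f (int y + int (a*i))))"
    by (intro sum.cong refl) (subst m1, simp add: mult_ac add_ac)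
  also have "\<dots> = (\<Sum>y<a. \<Sum>i<p. (-1) ^ y * ((-1) ^ i * f (int y + int (a*i))))"
    by (rule sum.swap)
  also have "\<dots> = (\<Sum>y<a. (-1) ^ y * (\<Sum>i<p. (-1) ^ i * f (int y + int (a*i))))"
    by (simp add: sum_distrib_left)
  finally have 1: "FN p f (Suc K) = \<dots>" .
  have 2: "FN p f K = (\<Sum>y<a. (-1) ^ y * (\<Sum>i<p. (-1) ^ i * f (int y)))"
    unfolding FN_def a_def
  proof (intro sum.cong refl)
    fix y
    have "(\<Sum>i<p. (-1) ^ i * f (int y)) = (\<Sum>i<p. (-1::'a) ^ i) * f (int y)"
      by (simp add: sum_distrib_right)
    then show "f (int y) * (-1) ^ y = (-1) ^ y * (\<Sum>i<p. (-1) ^ i * f (int y))"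
      using alt_sum[OF assms, where 'a='a] by simp
  qed
  show ?thesis unfolding 1 2 a_def
    by (simp add: sum_subtractf[symmetric] right_diff_distrib[symmetric] sum_subtractf)
qed

context ultra
begin

lemma FN_diff_bound:
  assumes "odd p" "0 \<le> d" "\<And>y i. N (f (int y + int (p^K * i)) - f (int y)) \<le> d"
  shows "N (FN p f (Suc K) - FN p f K) \<le> d"
  unfolding FN_diff[OF assms(1)]
proof (rule Nsum)
  fix y assume "y \<in> {..<p^K}"
  have "N (\<Sum>i<p. (-1) ^ i * (f (int y + int (p^K * i)) - f (int y))) \<le> d"
  proof (rule Nsum)
    fix i
    show "N ((-1) ^ i * (f (int y + int (p^K * i)) - f (int y))) \<le> d"
      using assms(3)[of y i] by (simp add: mu)
  qed (rule assms(2))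
  then show "N ((-1) ^ y * (\<Sum>i<p. (-1) ^ i * (f (int y + int (p^K * i)) - f (int y)))) \<le> d"
    by (simp add: mu)
qed (rule assms(2))

lemma FN_bound:
  assumes "\<And>x. N (f x) \<le> 1"
  shows "N (FN p f K) \<le> 1"
  unfolding FN_def by (intro Nsum) (auto simp: mu assms)

end


locale ultrap = ultraq +
  fixes p :: nat
  assumes pp: "prime p" and po: "odd p" and Np: "N (of_nat p) = 1 / real p"
begin

lemma p3: "p \<ge> 3"
proof -
  have "p \<ge> 2" using pp prime_ge_2_nat by blast
  moreover have "p \<noteq> 2" using po by auto
  ultimately show ?thesis by simp
qed

definition r where "r = N (1 - q)"
definition \<rho> where "\<rho> = max (1 / real p) (r ^ (p - 1))"

lemma r0: "0 < r" "r < 1" unfolding r_def using rpos qr by auto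

lemma rho: "0 \<le> \<rho>" "\<rho> < 1"
proof -
  show "0 \<le> \<rho>" unfolding \<rho>_def by (simp add: le_max_iff_disj)
  have "1 / real p < 1" using p3 by simp
  moreover have "r ^ (p - 1) < 1" using r0 p3 by (simp add: power_less_one_iff)
  ultimately show "\<rho> < 1" unfolding \<rho>_def by simp
qed

lemma q1': "1 - q \<noteq> 0" using q1 by simp

lemma qnum_nat: "qnum q (int s) = (\<Sum>i<s. q ^ i)"
  unfolding qnum_def using q1' by (simp add: one_diff_power_eq)

lemma qnum_shift: "qnum q (int y + int s) - qnum q (int y) = q ^ y * qnum q (int s)"
proof -
  have e: "int y + int s = int (y + s)" by simp
  have "qnum q (int (y+s)) - qnum q (int y) = ((1 - q^(y+s)) - (1 - q^y))/(1-q)"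
    unfolding qnum_def power_int_of_nat by (simp add: diff_divide_distrib)
  also have "(1 - q^(y+s)) - (1 - q^y) = q^y * (1 - q^s)" by (simp add: power_add algebra_simps)
  finally show ?thesis unfolding e qnum_def power_int_of_nat by simp
qed

lemma Npowdiff: assumes "N a \<le> 1" "N b \<le> 1" shows "N (a ^ n - b ^ n) \<le> N (a - b)"
proof -
  have "N (\<Sum>i<n. b ^ (n - Suc i) * a ^ i) \<le> 1"
    by (rule Nsum) (use assms nn in \<open>auto simp: mu power_le_one mult_le_one\<close>)
  then show ?thesis unfolding power_diff_sumr2[of a n b] mu
    using nn[of "a-b"] by (simp add: mult_left_le)
qed

lemma qnum_mult: "N (qnum q (int (a * i))) \<le> N (qnum q (int a))"
proof -
  have "qnum q (int (a * i)) = qnum q (int a) * (\<Sum>s<i. (q ^ a) ^ s)"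
    unfolding qnum_def power_int_of_nat using q1'
    by (simp add: power_mult one_diff_power_eq[of "q^a" i])
  moreover have "N (\<Sum>s<i. (q ^ a) ^ s) \<le> 1" by (rule Nsum) (auto simp: Nq)
  ultimately show ?thesis using nn by (simp add: mu mult_left_le)
qed

lemma Nchoose: assumes "0 < i" "i < p" shows "N (of_nat (p choose i)) \<le> 1 / real p"
proof -
  obtain m where m: "p choose i = p * m" using dvd_choose_prime[of i p] assms pp by (auto elim: dvdE)
  have "N (of_nat (p choose i)) = N (of_nat p) * N (of_nat m)" unfolding m by (simp add: mu)
  also have "\<dots> \<le> 1 / real p" unfolding Np using Nnat[of m] p3 by (simp add: divide_le_cancel)
  finally show ?thesis .
qed

lemma Nw: "N (1 - q ^ (p ^ K)) \<le> r * \<rho> ^ K"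
proof (induction K)
  case 0 then show ?case by (simp add: r_def)
next
  case (Suc K)
  define u where "u = q ^ (p ^ K)"
  define v where "v = u - 1"
  have Nv: "N v \<le> r * \<rho> ^ K" using Suc Ncomm[of u 1] unfolding v_def u_def by simp
  have "\<rho> ^ K \<le> 1" using rho by (simp add: power_le_one)
  then have "r * \<rho> ^ K \<le> r" using r0 by (simp add: mult_left_le)
  then have Nvr: "N v \<le> r" using Nv by linarith
  have Nv1: "N v \<le> 1" using Nvr r0 by simp
  have "q ^ (p ^ Suc K) = (v + 1) ^ p" unfolding v_def u_def by (simp only: power_Suc2 power_mult diff_add_cancel)
  also have "\<dots> = (\<Sum>i\<le>p. of_nat (p choose i) * v ^ i)" by (simp add: binomial_ring)
  also have "\<dots> = 1 + (\<Sum>i\<le>p - 1. of_nat (p choose Suc i) * v ^ Suc i)"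
  proof -
    have pe: "p = Suc (p - 1)" using p3 by simp
    have "(\<Sum>i\<le>Suc (p - 1). of_nat (p choose i) * v ^ i) = of_nat (p choose 0) * v ^ 0 + (\<Sum>i\<le>p - 1. of_nat (p choose Suc i) * v ^ Suc i)"
      by (rule sum.atMost_Suc_shift)
    then show ?thesis using pe by simp
  qed
  finally have "1 - q ^ (p ^ Suc K) = - (\<Sum>i\<le>p - 1. of_nat (p choose Suc i) * v ^ Suc i)" by simp
  then have "N (1 - q ^ (p ^ Suc K)) = N (\<Sum>i\<le>p - 1. of_nat (p choose Suc i) * v ^ Suc i)" by simp
  also have "\<dots> \<le> \<rho> * N v"
  proof (rule Nsum)
    fix i assume "i \<in> {..p-1}"
    then have i: "Suc i \<le> p" using p3 by auto
    show "N (of_nat (p choose Suc i) * v ^ Suc i) \<le> \<rho> * N v"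
    proof (cases "Suc i = p")
      case True
      have "N v ^ (p - 1) \<le> r ^ (p - 1)" using Nvr nn by (simp add: power_mono)
      then have "N v * N v ^ (p - 1) \<le> N v * r ^ (p - 1)" using nn by (simp add: mult_left_mono)
      moreover have "N v * r ^ (p - 1) \<le> \<rho> * N v" unfolding \<rho>_def using nn[of v]
        by (simp add: mult.commute[of _ "N v"] mult_left_mono)
      moreover have "N v ^ p = N v * N v ^ (p - 1)" using power_Suc[of "N v" "p-1"] p3 by simp
      ultimately show ?thesis using True by (simp add: mu)
    next
      case False
      then have "N (of_nat (p choose Suc i)) \<le> 1 / real p" using Nchoose i by simp
      moreover have "N v ^ Suc i \<le> N v" using Nv1 nn by (simp add: power_le_one mult_left_le)
      ultimately have "N (of_nat (p choose Suc i)) * N v ^ Suc i \<le> 1 / real p * N v"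
        using nn by (intro mult_mono) simp_all
      also have "\<dots> \<le> \<rho> * N v" unfolding \<rho>_def using nn[of v] by (intro mult_right_mono) simp_all
      finally show ?thesis by (simp add: mu)
    qed
  qed (simp add: nn rho)
  also have "\<dots> \<le> \<rho> * (r * \<rho> ^ K)" using Nv rho by (simp add: mult_left_mono)
  finally show ?case by (simp add: mult_ac)
qed

lemma Nqnum_pK: "N (qnum q (int (p ^ K))) \<le> \<rho> ^ K"
proof -
  have "N (qnum q (int (p ^ K))) = N (1 - q ^ (p ^ K)) / r"
    unfolding qnum_def r_def power_int_of_nat by (simp add: Ndiv)
  also have "\<dots> \<le> \<rho> ^ K" using Nw[of K] r0 by (simp add: divide_le_eq mult.commute)
  finally show ?thesis .
qed

lemma E_conv: "\<exists>L. av_tendsto N (FN p (\<lambda>x. qnum q x ^ n)) L \<and> N L \<le> 1 \<and> qEuler p N q n = L"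
proof -
  let ?f = "\<lambda>x. qnum q x ^ n"
  have d: "N (FN p ?f (Suc K) - FN p ?f K) \<le> 1 * \<rho> ^ K" for K
  proof -
    have "N (?f (int y + int (p^K * i)) - ?f (int y)) \<le> \<rho> ^ K" for y i
    proof -
      have "N (?f (int y + int (p^K * i)) - ?f (int y)) \<le> N (qnum q (int y + int (p^K * i)) - qnum q (int y))"
        by (rule Npowdiff[OF Nqnum Nqnum])
      also have "\<dots> = N (qnum q (int (p^K * i)))" unfolding qnum_shift by (simp only: mu Npow Nq power_one mult_1)
      also have "\<dots> \<le> N (qnum q (int (p^K)))" by (rule qnum_mult)
      also have "\<dots> \<le> \<rho> ^ K" by (rule Nqnum_pK)
      finally show ?thesis .
    qed
    then have "N (FN p ?f (Suc K) - FN p ?f K) \<le> \<rho> ^ K" using rho(1)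
      by (intro FN_diff_bound[OF po]) simp_all
    then show ?thesis by simp
  qed
  obtain L where L: "av_tendsto N (FN p ?f) L" using cauchy_geom[of "FN p ?f" 1 \<rho>, OF d] rho by auto
  have "N (L - 0) \<le> 1"
    by (rule tend_bound[OF L, of 0]) (simp add: FN_bound Nqnum power_le_one nn)
  moreover have "qEuler p N q n = L"
    unfolding qEuler_def fermionic_int_def using tend_lim[OF L] unfolding FN_def by simp
  ultimately show ?thesis using L by auto
qed

end


lemma FN_sum: "FN p (\<lambda>x. \<Sum>i\<in>A. f i x) K = (\<Sum>i\<in>A. FN p (f i) K)"
  unfolding FN_def sum_distrib_right by (rule sum.swap)

lemma FN_cmult: "FN p (\<lambda>x. c * f x) K = c * FN p f K"
  unfolding FN_def sum_distrib_left by (simp add: mult_ac)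

lemma FN_diff2: "FN p f K - FN p g K = FN p (\<lambda>x. f x - g x) K"
  unfolding FN_def sum_subtractf[symmetric] by (simp add: left_diff_distrib)

context ultra
begin
lemma FN_bound2:
  assumes "\<And>x. N (f x) \<le> b" "0 \<le> b"
  shows "N (FN p f K) \<le> b"
  unfolding FN_def by (intro Nsum) (auto simp: mu assms)
end

context ultrap
begin

lemma Ncc: assumes "k \<le> j" shows "N (cc k n j m) \<le> r ^ m"
proof -
  have "N (cc k n j m) = N (of_nat (j choose k)) * N (of_nat (n choose j)) * N (of_nat (bb (j - k) m) :: 'a) * r ^ m"
    unfolding cc_def bb_gchoose2[OF assms] r_def using Ncomm[of q 1] by (simp add: mu Nq)
  also have "\<dots> \<le> r ^ m"
    using Nnat[of "j choose k"] Nnat[of "n choose j"] Nnat[of "bb (j - k) m"] nn r0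
    by (simp add: mult_le_one mult_left_le_one_le)
  finally show ?thesis .
qed

lemma main_loc:
  assumes "k \<le> n"
  shows "fermionic_int p N (\<lambda>x. qBernstein k n x q) =
    (\<Sum>j=k..n. av_suminf N (\<lambda>m. cc k n j m * qEuler p N q (m + j)))"
proof -
  let ?X = "\<lambda>x. qnum q x"
  have Et: "av_tendsto N (FN p (\<lambda>x. ?X x ^ m)) (qEuler p N q m)" and NE: "N (qEuler p N q m) \<le> 1" for m
    using E_conv[of m] by auto
  define P where "P j M = (\<Sum>m<M. cc k n j m * qEuler p N q (m + j))" for j M
  have Tex: "\<exists>T. av_tendsto N (P j) T \<and> (\<forall>M. N (T - P j M) \<le> 1 * r ^ M)" if "j \<in> {k..n}" for j
  proof (rule cauchy_geom)
    fix M
    have "N (P j (Suc M) - P j M) = N (cc k n j M * qEuler p N q (M + j))" unfolding P_def by simp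
    also have "\<dots> \<le> r ^ M" using Ncc[of k j n M] that NE[of "M+j"] nn
      by (simp add: mu mult_le_one) (meson mult_left_le nn order_trans)
    finally show "N (P j (Suc M) - P j M) \<le> 1 * r ^ M" by simp
  qed (use r0 in auto)
  then obtain T where T: "\<And>j. j \<in> {k..n} \<Longrightarrow> av_tendsto N (P j) (T j) \<and> (\<forall>M. N (T j - P j M) \<le> 1 * r ^ M)"
    by metis
  have RHS: "(\<Sum>j=k..n. av_suminf N (\<lambda>m. cc k n j m * qEuler p N q (m + j))) = (\<Sum>j=k..n. T j)"
  proof (rule sum.cong)
    fix j assume j: "j \<in> {k..n}"
    show "av_suminf N (\<lambda>m. cc k n j m * qEuler p N q (m + j)) = T j"
      unfolding av_suminf_def using tend_lim T[OF j] unfolding P_def by simp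
  qed simp
  define B where "B = (\<lambda>x. qBernstein k n x q)"
  have "av_tendsto N (FN p B) (\<Sum>j=k..n. T j)"
    unfolding av_tendsto_def
  proof (intro allI impI)
    fix e :: real assume e: "e > 0"
    obtain M where M: "r ^ M < e" using real_arch_pow_inv[OF e r0(2)] by blast
    define tr where "tr x = (\<Sum>j=k..n. \<Sum>m<M. cc k n j m * ?X x ^ (m + j))" for x
    define A where "A = (\<Sum>j=k..n. P j M)"
    have FNtr: "FN p tr K = (\<Sum>j=k..n. \<Sum>m<M. cc k n j m * FN p (\<lambda>x. ?X x ^ (m + j)) K)" for K
      unfolding tr_def FN_sum FN_cmult by simp
    have "av_tendsto N (\<lambda>K. FN p tr K) A"
      unfolding FNtr A_def P_def
      by (intro tend_sum tend_cmult Et)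
    then obtain K0 where K0: "\<forall>K\<ge>K0. N (FN p tr K - A) < e" using e unfolding av_tendsto_def by blast
    have TA: "N ((\<Sum>j=k..n. T j) - A) \<le> r ^ M"
      unfolding A_def sum_subtractf[symmetric]
      by (rule Nsum) (use T r0 in auto)
    show "\<exists>K0. \<forall>K\<ge>K0. N (FN p B K - (\<Sum>j=k..n. T j)) < e"
    proof (intro exI allI impI)
      fix K assume K: "K \<ge> K0"
      have 1: "N (FN p B K - FN p tr K) \<le> r ^ M"
        unfolding FN_diff2 B_def tr_def
        by (rule FN_bound2) (use trunc_bound[OF assms] r0 in \<open>auto simp: r_def\<close>)
      have 2: "N (FN p tr K - (\<Sum>j=k..n. T j)) < e"
      proof -
        have "N (FN p tr K - (\<Sum>j=k..n. T j)) \<le> max (N (FN p tr K - A)) (N (A - (\<Sum>j=k..n. T j)))"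
          by (rule tri)
        moreover have "N (A - (\<Sum>j=k..n. T j)) = N ((\<Sum>j=k..n. T j) - A)" by (rule Ncomm)
        ultimately show ?thesis using K0 K TA M by auto
      qed
      have "N (FN p B K - (\<Sum>j=k..n. T j)) \<le> max (N (FN p B K - FN p tr K)) (N (FN p tr K - (\<Sum>j=k..n. T j)))"
        by (rule tri)
      then show "N (FN p B K - (\<Sum>j=k..n. T j)) < e" using 1 2 M by auto
    qed
  qed
  then have "fermionic_int p N B = (\<Sum>j=k..n. T j)"
    unfolding fermionic_int_def using tend_lim unfolding FN_def by simp
  then show ?thesis unfolding RHS B_def .
qed

end

theorem mainTheorem9:
  fixes p :: nat and nv :: "'a::field_char_0 \<Rightarrow> real" and q :: 'a and k n :: nat
  assumes "prime p" and "odd p"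
    and "is_Cp_abs p nv"
    and "q \<noteq> 1"
    and "nv (1 - q) < real p powr (-1 / (real p - 1))"
    and "k \<le> n"
  shows "fermionic_int p nv (\<lambda>x. qBernstein k n x q) =
    (\<Sum>j=k..n. av_suminf nv (\<lambda>m.
        of_nat (j choose k) * of_nat (n choose j)
        * ((of_int (int j - int k + int m - 1) :: 'a) gchoose m)
        * (-1) ^ (j - k + m) * q ^ (j - k) * (q - 1) ^ m * qEuler p nv q (m + j)))"
proof -
  have p2: "p \<ge> 2" using assms(1) prime_ge_2_nat by blast
  have "real p powr (-1 / (real p - 1)) < 1"
    by (rule powr_less_one) (use p2 in auto)
  then have r1: "nv (1 - q) < 1" using assms(5) by linarith
  interpret ultrap nv q p
    using assms(1-4) r1 unfolding is_Cp_abs_def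
    by unfold_locales auto
  show ?thesis using main_loc[OF assms(6)] unfolding cc_def .
qed

end
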